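(* Let $p,q$ be positive integers, with notation as in the context. Let $T_c$ be a positive integer with $T_c=2^{l_c}T_1$ for a non-negative integer $l_c$ (or $T_c=1$), and let $s$ be the integer with $T_{e_s}=2^sT_1$. Suppose the positive integer $e$ satisfies $$e\ge\begin{cases}\max(e_p,e_q) & \text{if } T_c=1;\\ e_{s,g}+1 & \text{if } l_c=0,\ T_1\ne 1;\\ e_{s,g}+2l_c-1 & \text{if } 1\le l_c\le s+1;\\ e_{s,g}+s+1+l_c & \text{if } l_c\ge s+2.\end{cases}$$ Then $N_{T_c,e}=N_{T_c,e+l}$ for every positive integer $l$.
   Context: Let $\mathbf{C}=\begin{bmatrix}1 & p\\ q & 1+pq\end{bmatrix}$. The Cat map over $\mathbb{Z}_{2^e}$ is the bijection $v\mapsto \mathbf{C}v\bmod 2^e$ of $\mathbb{Z}_{2^e}^2$; a cycle of length $n$ is an orbit of a point $v$ for which $n$ is the least positive integer with $\mathbf{C}^n v\equiv v\pmod{2^e}$. $N_{T_c,e}$ denotes the number of cycles of length $T_c$ of the Cat map over $\mathbb{Z}_{2^e}$, and $T_e$ its least period (least $n\ge1$ with $\mathbf{C}^n\equiv I\pmod{2^e}$). Put $A=pq+2$, $B=\sqrt{A^2-4}$, $G_n=\left(\frac{A+B}{2}\right)^n+\left(\frac{A-B}{2}\right)^n$, $H_n=\frac{1}{B}\left(\left(\frac{A+B}{2}\right)^n-\left(\frac{A-B}{2}\right)^n\right)$ (integers). For a nonzero integer $m$ let $v_2(m)$ be the largest $x$ with $2^x\mid m$. Let $e_p=v_2(p)$,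 $e_q=v_2(q)$; $T_1=3$ if $p,q$ are both odd, $T_1=2$ if exactly one of $p,q$ is odd, $T_1=1$ if both are even; $\hat h=-1$ if $e_p+e_q=0$ and $\hat h=\min(e_p,e_q)$ otherwise; $e_{s,h}=v_2(H_{T_1})$; $m_0=1$ if $\frac12 G_{T_1}\not\equiv 1\pmod 4$ and $m_0=0$ otherwise; $e_{s,g}=v_2\left(\frac12 G_{2^{m_0}T_1}-1\right)$; $x_0=e_{s,h}+m_0+\hat h-e_{s,g}$ if $e_{s,g}<e_{s,h}+m_0+\hat h$ and $x_0=0$ otherwise; and $e_s=e_{s,h}+m_0+\hat h+x_0$. The cases in the displayed condition are read in order (the first applicable one is used). *)

theory Defs
  imports "HOL-Analysis.Analysis" "HOL-Computational_Algebra.Factorial_Ring" "HOL-Number_Theory.Cong"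
begin

definition cat_C :: "int \<Rightarrow> int \<Rightarrow> int^2^2" where
  "cat_C p q = vector [vector [1, p], vector [q, 1 + p * q]]"

definition cat_pow :: "int \<Rightarrow> int \<Rightarrow> nat \<Rightarrow> int^2^2" where
  "cat_pow p q n = ((\<lambda>M. cat_C p q ** M) ^^ n) (mat 1)"

definition vcong :: "int \<Rightarrow> int^2 \<Rightarrow> int^2 \<Rightarrow> bool" where
  "vcong m u v \<longleftrightarrow> (\<forall>i. [u $ i = v $ i] (mod m))"

text \<open>The state space Z_{2^e}^2, represented by canonical residues.\<close>
definition cat_points :: "nat \<Rightarrow> (int^2) set" where
  "cat_points e = {v. \<forall>i. 0 \<le> v $ i \<and> v $ i < 2 ^ e}"

definition cat_map :: "int \<Rightarrow> int \<Rightarrow> nat \<Rightarrow> int^2 \<Rightarrow> int^2" where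
  "cat_map p q e v = (\<chi> i. (cat_C p q *v v) $ i mod 2 ^ e)"

definition point_period :: "int \<Rightarrow> int \<Rightarrow> nat \<Rightarrow> int^2 \<Rightarrow> nat" where
  "point_period p q e v = (LEAST n. n \<ge> 1 \<and> vcong (2 ^ e) (cat_pow p q n *v v) v)"

definition cat_orbit :: "int \<Rightarrow> int \<Rightarrow> nat \<Rightarrow> int^2 \<Rightarrow> (int^2) set" where
  "cat_orbit p q e v = {(cat_map p q e ^^ k) v | k. True}"

definition N_cyc :: "int \<Rightarrow> int \<Rightarrow> nat \<Rightarrow> nat \<Rightarrow> nat" where
  "N_cyc p q T e = card {cat_orbit p q e v | v. v \<in> cat_points e \<and> point_period p q e v = T}"

definition T_per :: "int \<Rightarrow> int \<Rightarrow> nat \<Rightarrow> nat" where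
  "T_per p q e = (LEAST n. n \<ge> 1 \<and> (\<forall>i j. [cat_pow p q n $ i $ j = mat 1 $ i $ j] (mod 2 ^ e)))"

text \<open>A = pq+2, B = sqrt(A^2-4), G_n and H_n (real closed forms; they are integers).\<close>
definition cat_A :: "int \<Rightarrow> int \<Rightarrow> int" where
  "cat_A p q = p * q + 2"

definition cat_B :: "int \<Rightarrow> int \<Rightarrow> real" where
  "cat_B p q = sqrt (real_of_int (cat_A p q) ^ 2 - 4)"

definition G_real :: "int \<Rightarrow> int \<Rightarrow> nat \<Rightarrow> real" where
  "G_real p q n = ((real_of_int (cat_A p q) + cat_B p q) / 2) ^ n
                 + ((real_of_int (cat_A p q) - cat_B p q) / 2) ^ n"

definition H_real :: "int \<Rightarrow> int \<Rightarrow> nat \<Rightarrow> real" where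
  "H_real p q n = (1 / cat_B p q) * (((real_of_int (cat_A p q) + cat_B p q) / 2) ^ n
                 - ((real_of_int (cat_A p q) - cat_B p q) / 2) ^ n)"

definition G_int :: "int \<Rightarrow> int \<Rightarrow> nat \<Rightarrow> int" where
  "G_int p q n = (THE z. real_of_int z = G_real p q n)"

definition H_int :: "int \<Rightarrow> int \<Rightarrow> nat \<Rightarrow> int" where
  "H_int p q n = (THE z. real_of_int z = H_real p q n)"

definition v2 :: "int \<Rightarrow> nat" where
  "v2 m = multiplicity (2::int) m"

definition T1 :: "int \<Rightarrow> int \<Rightarrow> nat" where
  "T1 p q = (if odd p \<and> odd q then 3 else if odd p \<or> odd q then 2 else 1)"

definition hhat :: "int \<Rightarrow> int \<Rightarrow> int" where
  "hhat p q = (if v2 p + v2 q = 0 then -1 else int (min (v2 p) (v2 q)))"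

definition e_sh :: "int \<Rightarrow> int \<Rightarrow> nat" where
  "e_sh p q = v2 (H_int p q (T1 p q))"

definition m0 :: "int \<Rightarrow> int \<Rightarrow> nat" where
  "m0 p q = (if \<not> [G_int p q (T1 p q) div 2 = 1] (mod 4) then 1 else 0)"

definition e_sg :: "int \<Rightarrow> int \<Rightarrow> nat" where
  "e_sg p q = v2 (G_int p q (2 ^ m0 p q * T1 p q) div 2 - 1)"

definition x0 :: "int \<Rightarrow> int \<Rightarrow> int" where
  "x0 p q = (let t = int (e_sh p q) + int (m0 p q) + hhat p q in
             if int (e_sg p q) < t then t - int (e_sg p q) else 0)"

definition e_s :: "int \<Rightarrow> int \<Rightarrow> int" where
  "e_s p q = int (e_sh p q) + int (m0 p q) + hhat p q + x0 p q"

end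

theory Submission
  imports Defs
begin


lemma mm2: "((X::int^2^2) ** Y)$i$j = X$i$1*Y$1$j + X$i$2*Y$2$j"
  by (simp add: matrix_matrix_mult_def sum_2)
lemma mv2: "((X::int^2^2) *v w)$i = X$i$1*w$1 + X$i$2*w$2"
  by (simp add: matrix_vector_mult_def sum_2)
lemma mat2_eq: "(X::int^2^2) = Y \<longleftrightarrow> X$1$1=Y$1$1 \<and> X$1$2=Y$1$2 \<and> X$2$1=Y$2$1 \<and> X$2$2=Y$2$2"
  by (auto simp: vec_eq_iff forall_2)
lemma mat1_2: "(mat 1 :: int^2^2)$1$1 = 1" "(mat 1 :: int^2^2)$1$2 = 0"
   "(mat 1 :: int^2^2)$2$1 = 0" "(mat 1 :: int^2^2)$2$2 = 1"
  by (simp_all add: mat_def)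
lemma catC2: "cat_C p q $1$1 = 1" "cat_C p q $1$2 = p" "cat_C p q $2$1 = q" "cat_C p q $2$2 = 1+p*q"
  by (simp_all add: cat_C_def)

fun hh :: "int \<Rightarrow> nat \<Rightarrow> int" where
  "hh A 0 = 0" | "hh A (Suc 0) = 1" | "hh A (Suc (Suc n)) = A * hh A (Suc n) - hh A n"

lemma cat_pow_Suc: "cat_pow p q (Suc n) = cat_C p q ** cat_pow p q n"
  by (simp add: cat_pow_def)

lemma cat_pow_entries:
  "cat_pow p q n $1$1 = hh (p*q+2) (Suc n) - (1+p*q) * hh (p*q+2) n \<and>
   cat_pow p q n $1$2 = p * hh (p*q+2) n \<and>
   cat_pow p q n $2$1 = q * hh (p*q+2) n \<and>
   cat_pow p q n $2$2 = hh (p*q+2) (Suc n) - hh (p*q+2) n"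
proof (induction n)
  case 0
  then show ?case by (simp add: cat_pow_def mat1_2)
next
  case (Suc n)
  have r: "hh (p*q+2) (Suc (Suc n)) = (p*q+2) * hh (p*q+2) (Suc n) - hh (p*q+2) n" by simp
  from Suc.IH have i1: "cat_pow p q n $1$1 = hh (p*q+2) (Suc n) - (1+p*q) * hh (p*q+2) n"
   and i2: "cat_pow p q n $1$2 = p * hh (p*q+2) n"
   and i3: "cat_pow p q n $2$1 = q * hh (p*q+2) n"
   and i4: "cat_pow p q n $2$2 = hh (p*q+2) (Suc n) - hh (p*q+2) n" by auto
  show ?case
    unfolding cat_pow_Suc mm2 catC2 r i1 i2 i3 i4 by (simp add: algebra_simps)
qed


fun gg :: "int \<Rightarrow> nat \<Rightarrow> int" where
  "gg A 0 = 2" | "gg A (Suc 0) = A" | "gg A (Suc (Suc n)) = A * gg A (Suc n) - gg A n"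

lemma gg_hh: "gg A n = 2 * hh A (Suc n) - A * hh A n \<and> gg A (Suc n) = 2 * hh A (Suc (Suc n)) - A * hh A (Suc n)"
proof (induction n)
  case 0 then show ?case by simp
next
  case (Suc n)
  from Suc.IH have e1: "gg A n = 2 * hh A (Suc n) - A * hh A n"
    and e2: "gg A (Suc n) = 2 * hh A (Suc (Suc n)) - A * hh A (Suc n)" by auto
  have r: "hh A (Suc (Suc (Suc n))) = A * hh A (Suc (Suc n)) - hh A (Suc n)" by simp
  have r2: "gg A (Suc (Suc n)) = A * gg A (Suc n) - gg A n" by simp
  show ?case unfolding r r2 e1 e2 by (simp add: algebra_simps)
qed

lemma hh_cassini: "hh A (Suc n)^2 - A * hh A (Suc n) * hh A n + hh A n ^2 = 1"
proof (induction n)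
  case 0 then show ?case by simp
next
  case (Suc n)
  then show ?case by (simp add: algebra_simps power2_eq_square)
qed

lemma gg_mono: "A \<ge> 3 \<Longrightarrow> gg A n \<ge> 2 \<and> gg A (Suc n) > gg A n"
proof (induction n)
  case 0 then show ?case by simp
next
  case (Suc n)
  hence a: "gg A n \<ge> 2" "gg A (Suc n) > gg A n" "A \<ge> 3" by auto
  have "(A - 1) * gg A (Suc n) \<ge> 2 * gg A (Suc n)"
    by (rule mult_right_mono) (use a in auto)
  hence b: "A * gg A (Suc n) - gg A (Suc n) \<ge> 2 * gg A (Suc n)" by (simp add: algebra_simps)
  have "gg A (Suc (Suc n)) = A * gg A (Suc n) - gg A n" by simp
  then show ?case using a b by linarith
qed

lemma G_real_rec:
  fixes A :: int and B :: real
  assumes "real_of_int A ^ 2 - 4 \<ge> 0" and "B = sqrt (real_of_int A ^ 2 - 4)"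
  shows "((A + B)/2)^n + ((A - B)/2)^n = real_of_int (gg A n) \<and>
         ((A + B)/2)^(Suc n) + ((A - B)/2)^(Suc n) = real_of_int (gg A (Suc n))"
proof (induction n)
  case 0
  have "(real_of_int A + B)/2 + (real_of_int A - B)/2 = real_of_int A" by (subst add_divide_distrib[symmetric]) simp
  then show ?case by simp
next
  case (Suc n)
  define x where "x = (A + B)/2"
  define y where "y = (A - B)/2"
  have "x + y = ((A + B) + (A - B))/2" unfolding x_def y_def by (rule add_divide_distrib[symmetric])
  hence s: "x + y = A" by simp
  have B2: "B^2 = A^2 - 4" using assms by simp
  have pr: "x * y = 1" unfolding x_def y_def
    by (simp add: field_simps power2_eq_square[symmetric] B2)
  have "x^(Suc (Suc n)) + y^(Suc (Suc n)) = (x+y)*(x^Suc n + y^Suc n) - (x*y)*(x^n+y^n)"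
    by (simp add: algebra_simps)
  also have "\<dots> = A * gg A (Suc n) - gg A n" using Suc.IH s pr by (simp add: x_def y_def)
  finally show ?case using Suc.IH by (simp add: x_def y_def)
qed

lemma G_int_eq:
  assumes "p > 0" "q > 0"
  shows "G_int p q n = gg (p*q+2) n"
proof -
  have "p*q > 0" using assms by simp
  hence pq: "p*q \<ge> 1" by linarith
  have "real_of_int (cat_A p q) ^ 2 - 4 \<ge> 0"
  proof -
    have "cat_A p q \<ge> 2" using pq by (simp add: cat_A_def)
    hence "real_of_int (cat_A p q) \<ge> 2" by linarith
    hence "real_of_int (cat_A p q) ^ 2 \<ge> 2^2" by (rule power_mono) simp
    thus ?thesis by simp
  qed
  from G_real_rec[OF this, of "cat_B p q" n]
  have "G_real p q n = real_of_int (gg (p*q+2) n)"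
    by (simp add: G_real_def cat_B_def cat_A_def)
  thus ?thesis unfolding G_int_def by (intro the_equality) auto
qed



definition kshift :: "int^2^2 \<Rightarrow> nat \<Rightarrow> bool" where
  "kshift X j \<longleftrightarrow> (\<forall>(w::int^2) k. (\<forall>i. (2::int)^(k+j) dvd (X *v w)$i) \<longrightarrow> (\<forall>i. (2::int)^k dvd w$i))"

lemma kshift_mult:
  assumes "kshift X j" "kshift Y i" shows "kshift (X ** Y) (i+j)"
  unfolding kshift_def
proof (rule allI, rule allI, rule impI)
  fix w :: "int^2" and k
  assume h: "\<forall>i'. (2::int)^(k+(i+j)) dvd ((X ** Y) *v w)$i'"
  have "\<forall>i'. (2::int)^((k+i)+j) dvd (X *v (Y *v w))$i'"
    using h by (simp add: matrix_vector_mul_assoc add.assoc)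
  hence "\<forall>i'. (2::int)^(k+i) dvd (Y *v w)$i'" using assms(1) unfolding kshift_def by blast
  thus "\<forall>i'. (2::int)^k dvd w$i'" using assms(2) unfolding kshift_def by blast
qed

lemma kshift_left:
  assumes "kshift (P ** M) j" shows "kshift M j"
  unfolding kshift_def
proof (rule allI, rule allI, rule impI)
  fix w :: "int^2" and k
  assume h: "\<forall>i'. (2::int)^(k+j) dvd (M *v w)$i'"
  have "\<forall>i'. (2::int)^(k+j) dvd ((P ** M) *v w)$i'"
    using h by (simp add: matrix_vector_mul_assoc[symmetric] mv2 forall_2)
  thus "\<forall>i'. (2::int)^k dvd w$i'" using assms unfolding kshift_def by blast
qed

lemma odd_pow_cancel:
  fixes o' x :: int
  assumes "odd o'" "2^k dvd o' * x" shows "2^k dvd x"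
proof -
  have "coprime ((2::int)^k) o'" using assms(1) by simp
  thus ?thesis using assms(2) coprime_dvd_mult_right_iff by blast
qed

lemma kshift_adj:
  fixes X :: "int^2^2"
  assumes dv: "\<forall>i j. (2::int)^a dvd X$i$j"
    and det: "X$1$1*X$2$2 - X$1$2*X$2$1 = 2^d * o'" and od: "odd o'"
  shows "kshift X (d - a)"
proof -
  obtain y11 where y11: "X$1$1 = 2^a*y11" using dv by (meson dvdE)
  obtain y12 where y12: "X$1$2 = 2^a*y12" using dv by (meson dvdE)
  obtain y21 where y21: "X$2$1 = 2^a*y21" using dv by (meson dvdE)
  obtain y22 where y22: "X$2$2 = 2^a*y22" using dv by (meson dvdE)
  define D where "D = y11*y22 - y12*y21"
  have pa: "(2::int)^(2*a) = 2^a * 2^a" by (simp add: mult_2 power_add)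
  have detD: "2^(2*a) * D = 2^d * o'" using det unfolding y11 y12 y21 y22 D_def pa
    by (simp add: algebra_simps)
  have da: "2*a \<le> d"
  proof (rule ccontr)
    assume "\<not> 2*a \<le> d"
    hence "2*a = d + (2*a - d)" "2*a - d > 0" by auto
    hence "(2::int)^d * (2^(2*a-d) * D) = 2^d * o'" using detD by (metis power_add mult.assoc)
    hence "o' = 2^(2*a-d) * D" by simp
    hence "even o'" using \<open>2*a - d > 0\<close> by simp
    thus False using od by simp
  qed
  have D: "D = 2^(d - 2*a) * o'"
  proof -
    have "(2::int)^(2*a) * D = 2^(2*a) * (2^(d-2*a) * o')"
      using detD da by (simp add: power_add[symmetric] mult.assoc[symmetric])
    thus ?thesis by simp
  qed
  show ?thesis unfolding kshift_def
  proof (rule allI, rule allI, rule impI)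
    fix w :: "int^2" and k
    assume h: "\<forall>i. (2::int)^(k + (d - a)) dvd (X *v w)$i"
    define u1 where "u1 = y11 * w$1 + y12 * w$2"
    define u2 where "u2 = y21 * w$1 + y22 * w$2"
    have ke: "k + (d - a) = a + (k + (d - 2*a))" using da by simp
    have "(2::int)^a * 2^(k + (d - 2*a)) dvd 2^a * u1"
      using h[rule_format, of 1] unfolding mv2 y11 y12 u1_def ke power_add
      by (simp add: algebra_simps)
    hence h1: "(2::int)^(k + (d - 2*a)) dvd u1" by simp
    have "(2::int)^a * 2^(k + (d - 2*a)) dvd 2^a * u2"
      using h[rule_format, of 2] unfolding mv2 y21 y22 u2_def ke power_add
      by (simp add: algebra_simps)
    hence h2: "(2::int)^(k + (d - 2*a)) dvd u2" by simp
    have "y22 * u1 - y12 * u2 = D * w$1"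
      unfolding u1_def u2_def D_def by (simp add: algebra_simps)
    hence e1: "y22 * u1 - y12 * u2 = 2^(d - 2*a) * (o' * w$1)" unfolding D by simp
    have "y11 * u2 - y21 * u1 = D * w$2"
      unfolding u1_def u2_def D_def by (simp add: algebra_simps)
    hence e2: "y11 * u2 - y21 * u1 = 2^(d - 2*a) * (o' * w$2)" unfolding D by simp
    have "(2::int)^(k + (d - 2*a)) dvd y22 * u1 - y12 * u2" using h1 h2 by simp
    hence "(2::int)^(d-2*a) * 2^k dvd 2^(d - 2*a) * (o' * w$1)" unfolding e1
      by (simp add: power_add mult.commute)
    hence "(2::int)^k dvd o' * w$1" by simp
    hence w1: "(2::int)^k dvd w$1" using od odd_pow_cancel by blast
    have "(2::int)^(k + (d - 2*a)) dvd y11 * u2 - y21 * u1" using h1 h2 by simp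
    hence "(2::int)^(d-2*a) * 2^k dvd 2^(d - 2*a) * (o' * w$2)" unfolding e2
      by (simp add: power_add mult.commute)
    hence "(2::int)^k dvd o' * w$2" by simp
    hence w2: "(2::int)^k dvd w$2" using od odd_pow_cancel by blast
    show "\<forall>i. (2::int)^k dvd w$i" using w1 w2 by (simp add: forall_2)
  qed
qed



lemma cat_pow_add: "cat_pow p q (m + n) = cat_pow p q m ** cat_pow p q n"
proof (induction m)
  case 0 then show ?case by (simp add: cat_pow_def matrix_mul_lid)
next
  case (Suc m) then show ?case by (simp add: cat_pow_Suc matrix_mul_assoc)
qed

lemma cat_pow_det: "cat_pow p q n $1$1 * cat_pow p q n $2$2 - cat_pow p q n $1$2 * cat_pow p q n $2$1 = 1"
proof -
  have c: "hh (p*q+2) (Suc n)^2 - (p*q+2) * hh (p*q+2) (Suc n) * hh (p*q+2) n + hh (p*q+2) n ^2 = 1"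
    by (rule hh_cassini)
  from cat_pow_entries[of p q n] have i1: "cat_pow p q n $1$1 = hh (p*q+2) (Suc n) - (1+p*q) * hh (p*q+2) n"
   and i2: "cat_pow p q n $1$2 = p * hh (p*q+2) n"
   and i3: "cat_pow p q n $2$1 = q * hh (p*q+2) n"
   and i4: "cat_pow p q n $2$2 = hh (p*q+2) (Suc n) - hh (p*q+2) n" by auto
  show ?thesis unfolding i1 i2 i3 i4 using c by (simp add: algebra_simps power2_eq_square)
qed

lemma cat_pow_tr: "cat_pow p q n $1$1 + cat_pow p q n $2$2 = gg (p*q+2) n"
  using cat_pow_entries[of p q n] gg_hh[of "p*q+2" n] by (simp add: algebra_simps)

lemma sq_diff: "((X::int^2^2) - mat 1) ** (X + mat 1) = X ** X - mat 1"
  by (simp add: mat2_eq mm2 mat1_2 algebra_simps)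
lemma sq_diff': "((X::int^2^2) + mat 1) ** (X - mat 1) = X ** X - mat 1"
  by (simp add: mat2_eq mm2 mat1_2 algebra_simps)

definition mI :: "int \<Rightarrow> int^2^2 \<Rightarrow> bool" where
  "mI m X \<longleftrightarrow> [X$1$1 = 1] (mod m) \<and> [X$1$2 = 0] (mod m) \<and> [X$2$1 = 0] (mod m) \<and> [X$2$2 = 1] (mod m)"

lemma mI_mult: assumes "mI m X" "mI m Y" shows "mI m (X ** Y)"
proof -
  have a: "[X$1$1 = 1] (mod m)" "[X$1$2 = 0] (mod m)" "[X$2$1 = 0] (mod m)" "[X$2$2 = 1] (mod m)"
    "[Y$1$1 = 1] (mod m)" "[Y$1$2 = 0] (mod m)" "[Y$2$1 = 0] (mod m)" "[Y$2$2 = 1] (mod m)"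
    using assms unfolding mI_def by auto
  have "[X$1$1*Y$1$1 + X$1$2*Y$2$1 = 1*1 + 0*0] (mod m)" by (intro cong_add cong_mult a)
  moreover have "[X$1$1*Y$1$2 + X$1$2*Y$2$2 = 1*0 + 0*1] (mod m)" by (intro cong_add cong_mult a)
  moreover have "[X$2$1*Y$1$1 + X$2$2*Y$2$1 = 0*1 + 1*0] (mod m)" by (intro cong_add cong_mult a)
  moreover have "[X$2$1*Y$1$2 + X$2$2*Y$2$2 = 0*0 + 1*1] (mod m)" by (intro cong_add cong_mult a)
  ultimately show ?thesis unfolding mI_def mm2 by simp
qed

lemma lift_aux1: "(1 + 2*t*a)*(1+2*t*a) + (2*t*b)*(2*t*c) = 1 + 4*t*(a + t*(a*a+b*c::int))"
  by algebra
lemma lift_aux2: "(1 + 2*t*a)*(2*t*b) + (2*t*b)*(1+2*t*d) = 4*t*(b + t*(a*b+b*d::int))"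
  by algebra

lemma cong_1E: assumes "[(x::int) = 1] (mod m)" obtains a where "x = 1 + m*a"
proof -
  have "m dvd x - 1" using assms by (simp add: cong_iff_dvd_diff)
  then obtain a where "x - 1 = m*a" by (auto elim: dvdE)
  hence "x = 1 + m*a" by simp
  thus ?thesis by (rule that)
qed
lemma cong_0E: assumes "[(x::int) = 0] (mod m)" obtains a where "x = m*a"
  using assms by (auto simp: cong_0_iff elim: dvdE)

lemma mI_lift: assumes "mI (2^Suc j) X" shows "mI (2^Suc (Suc j)) (X ** X)"
proof -
  define t :: int where "t = 2^j"
  have m1: "(2::int)^Suc j = 2*t" and m2: "(2::int)^Suc (Suc j) = 4*t" by (simp_all add: t_def)
  obtain a where a: "X$1$1 = 1 + 2*t*a" using assms unfolding mI_def m1 by (auto elim: cong_1E)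
  obtain b where b: "X$1$2 = 2*t*b" using assms unfolding mI_def m1 by (auto elim: cong_0E)
  obtain c where c: "X$2$1 = 2*t*c" using assms unfolding mI_def m1 by (auto elim: cong_0E)
  obtain d where d: "X$2$2 = 1 + 2*t*d" using assms unfolding mI_def m1 by (auto elim: cong_1E)
  have e11: "(X**X)$1$1 = 1 + 4*t*(a + t*(a*a+b*c))"
    unfolding mm2 a b c d by (rule lift_aux1)
  have e22: "(X**X)$2$2 = 1 + 4*t*(d + t*(d*d+c*b))"
    unfolding mm2 a b c d using lift_aux1[of t d c b] by (simp add: algebra_simps)
  have e12: "(X**X)$1$2 = 4*t*(b + t*(a*b+b*d))"
    unfolding mm2 a b c d by (rule lift_aux2)
  have e21: "(X**X)$2$1 = 4*t*(c + t*(d*c+c*a))"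
    unfolding mm2 a b c d using lift_aux2[of t d c a] by (simp add: algebra_simps)
  show ?thesis unfolding mI_def m2 e11 e12 e21 e22
    by (simp add: cong_iff_dvd_diff)
qed

lemma hh234: "hh A 2 = A" "hh A 3 = A*A - 1" "hh A 4 = A*(A*A - 1) - A"
  by (simp_all add: numeral_eq_Suc)

lemma odd_cong1: "[(x::int) = 1] (mod 2) \<longleftrightarrow> odd x"
  by (simp add: cong_def odd_iff_mod_2_eq_one)
lemma even_cong0: "[(x::int) = 0] (mod 2) \<longleftrightarrow> even x"
  by (simp add: cong_0_iff)

lemma mI_T1: "mI 2 (cat_pow p q (T1 p q))"
proof -
  define A where "A = p*q+2"
  have E: "cat_pow p q n $1$1 = hh A (Suc n) - (1+p*q) * hh A n"
     "cat_pow p q n $1$2 = p * hh A n"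
     "cat_pow p q n $2$1 = q * hh A n"
     "cat_pow p q n $2$2 = hh A (Suc n) - hh A n" for n
    using cat_pow_entries[of p q n] unfolding A_def by auto
  have h: "hh A 1 = 1" "hh A 2 = A" "hh A 3 = A*A - 1" "hh A 4 = A*(A*A - 1) - A"
    by (simp_all add: numeral_eq_Suc)
  have s: "Suc 1 = 2" "Suc 2 = 3" "Suc 3 = 4" by simp_all
  consider "odd p" "odd q" | "odd p" "even q" | "even p" "odd q" | "even p" "even q" by blast
  then show ?thesis
  proof cases
    case 1
    then have t: "T1 p q = 3" by (simp add: T1_def)
    have oA: "odd A" using 1 unfolding A_def by simp
    have "even (A*A - 1)" using oA by simp
    moreover have "odd (A*(A*A - 1) - A)" using oA \<open>even (A*A - 1)\<close> by simp
    ultimately show ?thesis unfolding t mI_def odd_cong1 even_cong0 E s h using 1 by simp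
  next
    case 2
    then have t: "T1 p q = 2" by (simp add: T1_def)
    have oA: "even A" using 2 unfolding A_def by simp
    show ?thesis unfolding t mI_def odd_cong1 even_cong0 E s h using 2 oA by simp
  next
    case 3
    then have t: "T1 p q = 2" by (simp add: T1_def)
    have oA: "even A" using 3 unfolding A_def by simp
    show ?thesis unfolding t mI_def odd_cong1 even_cong0 E s h using 3 oA by simp
  next
    case 4
    then have t: "T1 p q = 1" by (simp add: T1_def)
    show ?thesis unfolding t mI_def odd_cong1 even_cong0 E s h using 4 by (simp add: A_def)
  qed
qed



lemma v2_decomp: assumes "(x::int) \<noteq> 0" obtains o' where "x = 2^(v2 x) * o'" "odd o'"
proof -
  have nu: "\<not> is_unit (2::int)" by simp
  from multiplicity_decompose'[OF assms nu] obtain y where "x = 2 ^ multiplicity 2 x * y" "\<not> 2 dvd y" by blast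
  thus ?thesis using that unfolding v2_def by blast
qed

lemma mI_kT: "mI 2 (cat_pow p q (k * T1 p q))"
proof (induction k)
  case 0 then show ?case by (simp add: mI_def cat_pow_def mat1_2)
next
  case (Suc k)
  have "cat_pow p q (Suc k * T1 p q) = cat_pow p q (T1 p q) ** cat_pow p q (k * T1 p q)"
    by (simp add: cat_pow_add[symmetric])
  then show ?case using mI_mult[OF mI_T1 Suc.IH] by simp
qed

lemma mI_lift_pow: "mI (2^Suc j) (cat_pow p q (2^j * T1 p q))"
proof (induction j)
  case 0 then show ?case using mI_T1 by simp
next
  case (Suc j)
  have e: "2^Suc j * T1 p q = 2^j * T1 p q + 2^j * T1 p q" by simp
  have "cat_pow p q (2^Suc j * T1 p q) = cat_pow p q (2^j * T1 p q) ** cat_pow p q (2^j * T1 p q)"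
    unfolding e by (rule cat_pow_add)
  then show ?case using mI_lift[OF Suc.IH] by simp
qed

lemma mI_even_entries:
  assumes "mI 2 X"
  shows "\<forall>i j. (2::int)^1 dvd (X - mat 1)$i$j" "\<forall>i j. (2::int)^1 dvd (X + mat 1)$i$j"
proof -
  have a: "2 dvd X$1$1 - 1" "2 dvd X$1$2" "2 dvd X$2$1" "2 dvd X$2$2 - 1"
    using assms unfolding mI_def cong_iff_dvd_diff by auto
  have b: "2 dvd X$1$1 + 1" "2 dvd X$2$2 + 1"
    using a(1,4) by presburger+
  show "\<forall>i j. (2::int)^1 dvd (X - mat 1)$i$j" using a by (simp add: forall_2 mat1_2)
  show "\<forall>i j. (2::int)^1 dvd (X + mat 1)$i$j" using a b by (simp add: forall_2 mat1_2)
qed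

lemma det_M: "(cat_pow p q n - mat 1)$1$1 * (cat_pow p q n - mat 1)$2$2
   - (cat_pow p q n - mat 1)$1$2 * (cat_pow p q n - mat 1)$2$1 = 2 - gg (p*q+2) n"
  using cat_pow_det[of p q n] cat_pow_tr[of p q n] by (simp add: mat1_2 algebra_simps)

lemma det_P: "(cat_pow p q n + mat 1)$1$1 * (cat_pow p q n + mat 1)$2$2
   - (cat_pow p q n + mat 1)$1$2 * (cat_pow p q n + mat 1)$2$1 = 2 + gg (p*q+2) n"
  using cat_pow_det[of p q n] cat_pow_tr[of p q n] by (simp add: mat1_2 algebra_simps)

lemma gg_double: "gg (p*q+2) (2*n) = gg (p*q+2) n ^ 2 - 2"
proof -
  have "cat_pow p q (2*n) = cat_pow p q n ** cat_pow p q n" by (simp add: cat_pow_add[symmetric] mult_2)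
  hence "gg (p*q+2) (2*n) = (cat_pow p q n ** cat_pow p q n)$1$1 + (cat_pow p q n ** cat_pow p q n)$2$2"
    using cat_pow_tr[of p q "2*n"] by simp
  also have "\<dots> = (cat_pow p q n $1$1 + cat_pow p q n $2$2)^2
     - 2 * (cat_pow p q n $1$1 * cat_pow p q n $2$2 - cat_pow p q n $1$2 * cat_pow p q n $2$1)"
    by (simp add: mm2 power2_eq_square algebra_simps)
  finally show ?thesis using cat_pow_tr[of p q n] cat_pow_det[of p q n] by simp
qed

lemma gg_T1_mod4: "\<exists>z. gg (p*q+2) (T1 p q) = 2 + 4*z"
proof -
  let ?X = "cat_pow p q (T1 p q)"
  have m: "mI 2 ?X" by (rule mI_T1)
  obtain a where a: "?X$1$1 = 1 + 2*a" using m unfolding mI_def by (auto elim: cong_1E)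
  obtain b where b: "?X$1$2 = 2*b" using m unfolding mI_def by (auto elim: cong_0E)
  obtain c where c: "?X$2$1 = 2*c" using m unfolding mI_def by (auto elim: cong_0E)
  obtain d where d: "?X$2$2 = 1 + 2*d" using m unfolding mI_def by (auto elim: cong_1E)
  have "(1 + 2*a)*(1+2*d) - (2*b)*(2*c) = 1" using cat_pow_det[of p q "T1 p q"] unfolding a b c d .
  hence "a + d = 2*(b*c - a*d)" by (simp add: algebra_simps)
  moreover have "gg (p*q+2) (T1 p q) = 2 + 2*(a+d)" using cat_pow_tr[of p q "T1 p q"] unfolding a d by simp
  ultimately show ?thesis by (intro exI[of _ "b*c - a*d"]) simp
qed

definition n0 :: "int \<Rightarrow> int \<Rightarrow> nat" where "n0 p q = 2 ^ m0 p q * T1 p q"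

lemma gg_n0_mod8:
  assumes "p > 0" "q > 0"
  shows "\<exists>z. gg (p*q+2) (n0 p q) = 2 + 8*z"
proof -
  obtain z where z: "gg (p*q+2) (T1 p q) = 2 + 4*z" using gg_T1_mod4 by blast
  have G: "G_int p q (T1 p q) div 2 = 1 + 2*z" using G_int_eq[OF assms] z by simp
  show ?thesis
  proof (cases "even z")
    case True
    then obtain y where "z = 2*y" by (auto elim: evenE)
    hence "[G_int p q (T1 p q) div 2 = 1] (mod 4)" using G by (simp add: cong_iff_dvd_diff)
    hence "m0 p q = 0" by (simp add: m0_def)
    thus ?thesis using z \<open>z = 2*y\<close> by (simp add: n0_def)
  next
    case False
    have "\<not> [G_int p q (T1 p q) div 2 = 1] (mod 4)"
    proof
      assume "[G_int p q (T1 p q) div 2 = 1] (mod 4)"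
      hence "4 dvd 2 * z" using G by (simp add: cong_iff_dvd_diff)
      hence "even z" by presburger
      thus False using False by simp
    qed
    hence "m0 p q = 1" by (simp add: m0_def)
    hence "n0 p q = 2 * T1 p q" by (simp add: n0_def)
    hence "gg (p*q+2) (n0 p q) = (2 + 4*z)^2 - 2" using gg_double[of p q "T1 p q"] z by simp
    also have "\<dots> = 2 + 8*(2*z + 2*z*z)" by (simp add: power2_eq_square algebra_simps)
    finally show ?thesis by blast
  qed
qed

lemma gg_pow_mod8:
  assumes "p > 0" "q > 0"
  shows "\<exists>z. gg (p*q+2) (2^i * n0 p q) = 2 + 8*z"
proof (induction i)
  case 0 then show ?case using gg_n0_mod8[OF assms] by simp
next
  case (Suc i)
  then obtain z where z: "gg (p*q+2) (2^i * n0 p q) = 2 + 8*z" by blast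
  have "gg (p*q+2) (2^Suc i * n0 p q) = gg (p*q+2) (2 * (2^i * n0 p q))" by (simp add: mult.assoc)
  also have "\<dots> = (2 + 8*z)^2 - 2" using gg_double z by simp
  also have "\<dots> = 2 + 8*(4*z + 8*z*z)" by (simp add: power2_eq_square algebra_simps)
  finally show ?case by blast
qed

lemma gg_gt2:
  assumes "p > 0" "q > 0" "n \<ge> 1"
  shows "gg (p*q+2) n > 2"
proof -
  have "p*q > 0" using assms by simp
  hence A3: "p*q+2 \<ge> 3" by linarith
  have "gg (p*q+2) n \<ge> 2 + int n" for n
  proof (induction n)
    case 0 then show ?case by simp
  next
    case (Suc n)
    then show ?case using gg_mono[OF A3, of n] by simp
  qed
  from this[of n] assms(3) show ?thesis by simp
qed



lemma T1_pos: "T1 p q \<ge> 1" by (simp add: T1_def)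

lemma kshift_n0:
  assumes "p > 0" "q > 0"
  shows "kshift (cat_pow p q (n0 p q) - mat 1) (e_sg p q)"
proof -
  obtain z where z: "gg (p*q+2) (n0 p q) = 2 + 8*z" using gg_n0_mod8[OF assms] by blast
  have n1: "n0 p q \<ge> 1" using T1_pos[of p q] by (simp add: n0_def)
  have "gg (p*q+2) (n0 p q) > 2" by (rule gg_gt2[OF assms n1])
  hence zn: "z \<noteq> 0" using z by auto
  have es: "e_sg p q = v2 (4*z)"
    unfolding e_sg_def G_int_eq[OF assms] n0_def[symmetric] z by simp
  obtain o' where o: "4*z = 2^(v2 (4*z)) * o'" "odd o'" using v2_decomp[of "4*z"] zn by auto
  have det: "(cat_pow p q (n0 p q) - mat 1)$1$1 * (cat_pow p q (n0 p q) - mat 1)$2$2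
   - (cat_pow p q (n0 p q) - mat 1)$1$2 * (cat_pow p q (n0 p q) - mat 1)$2$1 = 2^(v2 (4*z) + 1) * (- o')"
    unfolding det_M z using o(1) by (simp add: algebra_simps)
  have m: "mI 2 (cat_pow p q (n0 p q))" unfolding n0_def by (rule mI_kT)
  have "kshift (cat_pow p q (n0 p q) - mat 1) (v2 (4*z) + 1 - 1)"
    by (rule kshift_adj[OF mI_even_entries(1)[OF m] det]) (use o(2) in simp)
  thus ?thesis unfolding es by simp
qed

lemma kshift_P:
  assumes "p > 0" "q > 0"
  shows "kshift (cat_pow p q (2^i * n0 p q) + mat 1) 1"
proof -
  obtain z where z: "gg (p*q+2) (2^i * n0 p q) = 2 + 8*z" using gg_pow_mod8[OF assms] by blast
  have det: "(cat_pow p q (2^i * n0 p q) + mat 1)$1$1 * (cat_pow p q (2^i * n0 p q) + mat 1)$2$2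
   - (cat_pow p q (2^i * n0 p q) + mat 1)$1$2 * (cat_pow p q (2^i * n0 p q) + mat 1)$2$1 = 2^2 * (1 + 2*z)"
    unfolding det_P z by simp
  have e: "2^i * n0 p q = (2^i * 2^m0 p q) * T1 p q" by (simp add: n0_def)
  have m: "mI 2 (cat_pow p q (2^i * n0 p q))" unfolding e by (rule mI_kT)
  have "kshift (cat_pow p q (2^i * n0 p q) + mat 1) (2 - 1)"
    by (rule kshift_adj[OF mI_even_entries(2)[OF m] det]) simp
  thus ?thesis by simp
qed

lemma kshift_Mi:
  assumes "p > 0" "q > 0"
  shows "kshift (cat_pow p q (2^i * n0 p q) - mat 1) (e_sg p q + i)"
proof (induction i)
  case 0 then show ?case using kshift_n0[OF assms] by simp
next
  case (Suc i)
  let ?n = "2^i * n0 p q"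
  have e: "2^Suc i * n0 p q = ?n + ?n" by simp
  have "cat_pow p q (2^Suc i * n0 p q) - mat 1 = (cat_pow p q ?n - mat 1) ** (cat_pow p q ?n + mat 1)"
    unfolding e cat_pow_add sq_diff ..
  moreover have "kshift ((cat_pow p q ?n - mat 1) ** (cat_pow p q ?n + mat 1)) (1 + (e_sg p q + i))"
    by (rule kshift_mult[OF Suc.IH kshift_P[OF assms]])
  ultimately show ?case by simp
qed

lemma kshift_T1:
  assumes "p > 0" "q > 0" "m0 p q = 1"
  shows "kshift (cat_pow p q (T1 p q) - mat 1) (e_sg p q)"
proof -
  have e: "n0 p q = T1 p q + T1 p q" using assms(3) by (simp add: n0_def)
  have "cat_pow p q (n0 p q) - mat 1 = (cat_pow p q (T1 p q) + mat 1) ** (cat_pow p q (T1 p q) - mat 1)"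
    unfolding e cat_pow_add sq_diff' ..
  thus ?thesis using kshift_n0[OF assms(1,2)] kshift_left by metis
qed

lemma kshift_C1:
  assumes "p > 0" "q > 0"
  shows "kshift (cat_pow p q 1 - mat 1) (max (v2 p) (v2 q))"
proof -
  obtain op where op: "p = 2^(v2 p) * op" "odd op" using v2_decomp[of p] assms by auto
  obtain oq where oq: "q = 2^(v2 q) * oq" "odd oq" using v2_decomp[of q] assms by auto
  let ?a = "min (v2 p) (v2 q)"
  have C1: "cat_pow p q 1 = cat_C p q" by (simp add: cat_pow_def matrix_mul_rid)
  have dp: "(2::int)^?a dvd p"
    by (rule dvd_trans[OF le_imp_power_dvd[of ?a "v2 p"]]) (auto simp: v2_def multiplicity_dvd)
  have dq: "(2::int)^?a dvd q"
    by (rule dvd_trans[OF le_imp_power_dvd[of ?a "v2 q"]]) (auto simp: v2_def multiplicity_dvd)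
  have dv: "\<forall>i j. (2::int)^?a dvd (cat_pow p q 1 - mat 1)$i$j"
    unfolding C1 using dp dq by (simp add: forall_2 catC2 mat1_2)
  have det: "(cat_pow p q 1 - mat 1)$1$1 * (cat_pow p q 1 - mat 1)$2$2
   - (cat_pow p q 1 - mat 1)$1$2 * (cat_pow p q 1 - mat 1)$2$1 = 2^(v2 p + v2 q) * (- (op * oq))"
    unfolding C1 by (simp add: catC2 mat1_2) (subst op(1), subst oq(1), simp add: power_add algebra_simps)
  have "kshift (cat_pow p q 1 - mat 1) (v2 p + v2 q - ?a)"
    by (rule kshift_adj[OF dv det]) (use op oq in simp)
  moreover have "v2 p + v2 q - ?a = max (v2 p) (v2 q)" by simp
  ultimately show ?thesis by simp
qed



definition phi :: "nat \<Rightarrow> int^2 \<Rightarrow> int^2" where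
  "phi l v = (\<chi> i. 2^l * v$i)"

lemma phi_nth [simp]: "phi l v $ i = 2^l * v$i"
  by (simp add: phi_def)

lemma mv_phi: "(X::int^2^2) *v phi l v = phi l (X *v v)"
  by (simp add: vec_eq_iff forall_2 mv2 algebra_simps)

lemma cong_pow_cancel: "[(2::int)^l * a = 2^l * b] (mod 2^(e+l)) \<longleftrightarrow> [a = b] (mod 2^e)"
proof -
  have "(2::int)^l * a - 2^l * b = 2^l * (a - b)" by (simp add: algebra_simps)
  moreover have "(2::int)^(e+l) = 2^l * 2^e" by (simp add: power_add)
  ultimately show ?thesis by (simp add: cong_iff_dvd_diff)
qed

lemma vcong_phi: "vcong (2^(e+l)) (phi l x) (phi l y) \<longleftrightarrow> vcong (2^e) x y"
  by (simp add: vcong_def cong_pow_cancel)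

lemma period_phi: "point_period p q (e+l) (phi l v) = point_period p q e v"
  unfolding point_period_def mv_phi vcong_phi ..

lemma cat_map_phi: "cat_map p q (e+l) (phi l v) = phi l (cat_map p q e v)"
proof -
  have "(2::int)^(e+l) = 2^l * 2^e" by (simp add: power_add)
  thus ?thesis unfolding cat_map_def by (simp add: vec_eq_iff mv_phi mod_mult_mult1)
qed

lemma funpow_phi: "(cat_map p q (e+l) ^^ k) (phi l v) = phi l ((cat_map p q e ^^ k) v)"
  by (induction k) (simp_all add: cat_map_phi)

lemma orbit_phi: "cat_orbit p q (e+l) (phi l v) = phi l ` cat_orbit p q e v"
  unfolding cat_orbit_def by (auto simp: funpow_phi)

lemma points_phi: "v \<in> cat_points e \<Longrightarrow> phi l v \<in> cat_points (e+l)"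
proof -
  assume v: "v \<in> cat_points e"
  have "0 \<le> 2^l * v$i \<and> 2^l * v$i < (2::int)^(e+l)" for i
  proof -
    from v have "0 \<le> v$i" "v$i < 2^e" by (auto simp: cat_points_def)
    moreover have "(2::int)^(e+l) = 2^l * 2^e" by (simp add: power_add)
    ultimately show ?thesis by simp
  qed
  thus ?thesis by (simp add: cat_points_def)
qed

lemma inj_phi: "inj (phi l)"
  by (rule injI) (simp add: vec_eq_iff)

lemma vcong_mI: "mI m X \<Longrightarrow> vcong m (X *v w) w"
proof -
  assume "mI m X"
  hence a: "[X$1$1 = 1] (mod m)" "[X$1$2 = 0] (mod m)" "[X$2$1 = 0] (mod m)" "[X$2$2 = 1] (mod m)"
    unfolding mI_def by auto
  have "[X$1$1 * w$1 + X$1$2 * w$2 = 1 * w$1 + 0 * w$2] (mod m)" by (intro cong_add cong_mult a cong_refl)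
  moreover have "[X$2$1 * w$1 + X$2$2 * w$2 = 0 * w$1 + 1 * w$2] (mod m)" by (intro cong_add cong_mult a cong_refl)
  ultimately show ?thesis by (simp add: vcong_def forall_2 mv2)
qed

lemma mI_weaken: "mI (2^Suc E) X \<Longrightarrow> mI (2^E) X"
  unfolding mI_def by (meson cong_dvd_modulus le_imp_power_dvd le_SucI order_refl)

lemma period_exists: "\<exists>n. n \<ge> 1 \<and> vcong (2^E) (cat_pow p q n *v w) w"
proof (intro exI conjI)
  show "2^E * T1 p q \<ge> 1" using T1_pos[of p q] by simp
  show "vcong (2^E) (cat_pow p q (2^E * T1 p q) *v w) w"
    by (rule vcong_mI[OF mI_weaken[OF mI_lift_pow]])
qed

lemma period_prop: "vcong (2^E) (cat_pow p q (point_period p q E w) *v w) w"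
  unfolding point_period_def using LeastI_ex[OF period_exists] by blast

lemma kshift_apply:
  assumes vc: "vcong (2^(e+l)) (X *v w) w" and ks: "kshift (X - mat 1) J" and J: "J \<le> e"
  shows "\<forall>i. (2::int)^l dvd w$i"
proof -
  have "\<forall>i. (2::int)^((e + l - J) + J) dvd ((X - mat 1) *v w)$i"
  proof
    fix i
    have "(2::int)^(e+l) dvd (X *v w)$i - w$i" using vc by (simp add: vcong_def cong_iff_dvd_diff)
    moreover have "((X - mat 1) *v w)$i = (X *v w)$i - w$i"
      using exhaust_2[of i] by (auto simp: mv2 mat1_2 algebra_simps)
    moreover have "e + l - J + J = e + l" using J by simp
    ultimately show "(2::int)^((e + l - J) + J) dvd ((X - mat 1) *v w)$i" by simp
  qed
  hence "\<forall>i. (2::int)^(e + l - J) dvd w$i" using ks unfolding kshift_def by blast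
  moreover have "(2::int)^l dvd 2^(e+l-J)" using J by (simp add: le_imp_power_dvd)
  ultimately show ?thesis using dvd_trans by blast
qed

lemma points_div:
  assumes w: "w \<in> cat_points (e+l)" and d: "\<forall>i. (2::int)^l dvd w$i"
  shows "\<exists>v \<in> cat_points e. w = phi l v"
proof -
  define v where "v = (\<chi> i. w$i div 2^l)"
  have wv: "w$i = 2^l * v$i" for i using d by (simp add: v_def)
  have "w = phi l v" by (simp add: vec_eq_iff wv)
  moreover have "v \<in> cat_points e"
    unfolding cat_points_def
  proof (intro CollectI allI conjI)
    fix i
    have "0 \<le> w$i" "w$i < 2^(e+l)" using w by (auto simp: cat_points_def)
    moreover have "(2::int)^(e+l) = 2^l * 2^e" by (simp add: power_add)
    ultimately have "0 \<le> 2^l * v$i" "2^l * v$i < 2^l * 2^e" by (simp_all add: wv)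
    thus "0 \<le> v$i" "v$i < 2^e" by (simp_all add: zero_le_mult_iff)
  qed
  ultimately show ?thesis by blast
qed

lemma N_stable:
  assumes ks: "kshift (cat_pow p q Tc - mat 1) J" and J: "J \<le> e"
  shows "N_cyc p q Tc (e + l) = N_cyc p q Tc e"
proof -
  define S where "S E = {cat_orbit p q E v | v. v \<in> cat_points E \<and> point_period p q E v = Tc}" for E
  have "S (e+l) = (\<lambda>X. phi l ` X) ` S e"
  proof
    show "S (e+l) \<subseteq> (\<lambda>X. phi l ` X) ` S e"
    proof
      fix X assume "X \<in> S (e+l)"
      then obtain w where X: "X = cat_orbit p q (e+l) w" and w: "w \<in> cat_points (e+l)"
        and pw: "point_period p q (e+l) w = Tc" by (auto simp: S_def)
      have "vcong (2^(e+l)) (cat_pow p q Tc *v w) w" using period_prop[of "e+l" p q w] pw by simp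
      hence "\<forall>i. (2::int)^l dvd w$i" using kshift_apply ks J by blast
      then obtain v where v: "v \<in> cat_points e" and wv: "w = phi l v" using points_div w by blast
      have "point_period p q e v = Tc" using pw wv period_phi by metis
      hence "cat_orbit p q e v \<in> S e" using v by (auto simp: S_def)
      moreover have "X = phi l ` cat_orbit p q e v" using X wv orbit_phi by metis
      ultimately show "X \<in> (\<lambda>X. phi l ` X) ` S e" by blast
    qed
  next
    show "(\<lambda>X. phi l ` X) ` S e \<subseteq> S (e+l)"
    proof
      fix Y assume "Y \<in> (\<lambda>X. phi l ` X) ` S e"
      then obtain v where Y: "Y = phi l ` cat_orbit p q e v" and v: "v \<in> cat_points e"
        and pv: "point_period p q e v = Tc" by (auto simp: S_def)
      have "Y = cat_orbit p q (e+l) (phi l v)" using Y orbit_phi by metis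
      moreover have "phi l v \<in> cat_points (e+l)" using v by (rule points_phi)
      moreover have "point_period p q (e+l) (phi l v) = Tc" using pv period_phi by metis
      ultimately show "Y \<in> S (e+l)" by (auto simp: S_def)
    qed
  qed
  moreover have "inj_on (\<lambda>X. phi l ` X) (S e)"
    using inj_phi by (auto simp: inj_on_def inj_image_eq_iff)
  ultimately have "card (S (e+l)) = card (S e)" by (simp add: card_image)
  thus ?thesis by (simp add: N_cyc_def S_def)
qed



lemma m0_le1: "m0 p q \<le> 1" by (simp add: m0_def)

theorem theorem4:
  fixes p q :: int and Tc lc s e :: nat
  assumes hp: "p > 0" and hq: "q > 0"
    and hTc_pos: "Tc > 0"
    and hTc: "Tc = 2 ^ lc * T1 p q \<or> Tc = 1"
    and hs: "T_per p q (nat (e_s p q)) = 2 ^ s * T1 p q"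
    and he_pos: "e > 0"
    and he: "int e \<ge>
      (if Tc = 1 then int (max (v2 p) (v2 q))
       else if lc = 0 \<and> T1 p q \<noteq> 1 then int (e_sg p q) + 1
       else if 1 \<le> lc \<and> lc \<le> s + 1 then int (e_sg p q) + 2 * int lc - 1
       else int (e_sg p q) + int s + 1 + int lc)"
  shows "\<forall>l::nat. l > 0 \<longrightarrow> N_cyc p q Tc e = N_cyc p q Tc (e + l)"
proof (intro allI impI)
  fix l :: nat
  assume "l > 0"
  have "\<exists>J. kshift (cat_pow p q Tc - mat 1) J \<and> J \<le> e"
  proof (cases "Tc = 1")
    case True
    have "max (v2 p) (v2 q) \<le> e" using he True by simp
    thus ?thesis using kshift_C1[OF hp hq] True by blast
  next
    case False
    hence Tc: "Tc = 2 ^ lc * T1 p q" using hTc by blast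
    have ee: "e_sg p q + lc \<le> e"
    proof -
      have "int (e_sg p q) + int lc \<le> int e"
      proof (cases "lc = 0 \<and> T1 p q \<noteq> 1")
        case True thus ?thesis using he False by simp
      next
        case F2: False
        show ?thesis
        proof (cases "1 \<le> lc \<and> lc \<le> s + 1")
          case True thus ?thesis using he False F2 by simp
        next
          case False thus ?thesis using he \<open>Tc \<noteq> 1\<close> F2 by (auto split: if_split_asm)
        qed
      qed
      thus ?thesis by linarith
    qed
    show ?thesis
    proof (cases "m0 p q \<le> lc")
      case True
      have "Tc = 2^(lc - m0 p q) * n0 p q" unfolding Tc n0_def
        using True by (simp add: power_add[symmetric])
      moreover have "e_sg p q + (lc - m0 p q) \<le> e" using ee by simp
      ultimately show ?thesis using kshift_Mi[OF hp hq, of "lc - m0 p q"] by metis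
    next
      case False
      hence "m0 p q = 1" "lc = 0" using m0_le1[of p q] by auto
      hence "Tc = T1 p q" using Tc by simp
      thus ?thesis using kshift_T1[OF hp hq \<open>m0 p q = 1\<close>] ee by auto
    qed
  qed
  then obtain J where "kshift (cat_pow p q Tc - mat 1) J" "J \<le> e" by blast
  thus "N_cyc p q Tc e = N_cyc p q Tc (e + l)" using N_stable by metis
qed

end
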